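(* There is an absolute constant $C>0$ such that for every reduced integer $n\ge3$, $$\left|\Omega(n)-\frac{\log n}{\log\log n}\right|\le C\,\frac{\log n}{(\log\log n)^2}.$$
   Context: $\Omega(n)$ is the number of prime factors of $n$ counted with multiplicity. Let $p_i$ denote the $i$-th prime ($p_1=2$). A positive integer $\prod_i p_i^{a_i}$ (with $a_i=0$ for all sufficiently large $i$) is called reduced if $\left\lfloor\frac{a_i+1}{a_j+2}\right\rfloor<\frac{\log p_j}{\log p_i}$ for all $i,j\ne 1$, and $2^{a_1}<8p_j^2$ for every $j$ with $a_j=0$. *)

theory Defs
  imports "HOL-Analysis.Analysis" "HOL-Computational_Algebra.Primes"
begin

definition bigOmega :: "nat \<Rightarrow> nat" where
  "bigOmega n = size (prime_factorization n)"

text \<open>Writing n = prod p_i^(a_i), a_i is the multiplicity of the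
  i-th prime in n. Indices i, j different from 1 correspond to odd primes p, q;
  the second condition ranges over all primes q not dividing n.\<close>
definition reduced :: "nat \<Rightarrow> bool" where
  "reduced n \<longleftrightarrow> n > 0 \<and>
     (\<forall>p q. prime p \<and> prime q \<and> p \<noteq> 2 \<and> q \<noteq> 2 \<longrightarrow>
        real_of_int \<lfloor>real (multiplicity p n + 1) / real (multiplicity q n + 2)\<rfloor>
          < ln (real q) / ln (real p)) \<and>
     (\<forall>q. prime q \<and> multiplicity q n = 0 \<longrightarrow>
        (2::nat) ^ multiplicity 2 n < 8 * q^2)"

end

theory Submission
  imports Defs "HOL-Real_Asymp.Real_Asymp"
begin

definition thetaf :: "nat \<Rightarrow> real" where
  "thetaf x = (\<Sum>p\<in>{p. prime p \<and> p \<le> x}. ln (real p))"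

definition pif :: "nat \<Rightarrow> nat" where
  "pif x = card {p. prime p \<and> p \<le> x}"

lemma finite_primes_le: "finite {p::nat. prime p \<and> p \<le> x}"
  by (rule finite_subset[of _ "{..x}"]) auto

lemma ln_prime_ge0: "prime (p::nat) \<Longrightarrow> ln (real p) \<ge> 0"
  using prime_ge_1_nat[of p] by simp

lemma ln_prime_gt0: "prime (p::nat) \<Longrightarrow> ln (real p) > 0"
  using prime_gt_1_nat[of p] by simp

lemma ln_nat_factor:
  assumes "n > 0"
  shows "ln (real n) = (\<Sum>p\<in>prime_factors n. real (multiplicity p n) * ln (real p))"
proof -
  have "real n = real (\<Prod>p \<in> prime_factors n. p ^ multiplicity p n)"
    using prime_factorization_nat[OF assms] by simp
  also have "\<dots> = (\<Prod>p \<in> prime_factors n. real p ^ multiplicity p n)" by simp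
  finally have "ln (real n) = ln (\<Prod>p \<in> prime_factors n. real p ^ multiplicity p n)" by simp
  also have "\<dots> = (\<Sum>p\<in>prime_factors n. ln (real p ^ multiplicity p n))"
    by (rule ln_prod) (auto dest: in_prime_factors_imp_prime simp: prime_gt_0_nat)
  also have "\<dots> = (\<Sum>p\<in>prime_factors n. real (multiplicity p n) * ln (real p))"
    by (rule sum.cong) (auto simp: ln_realpow prime_gt_0_nat dest: in_prime_factors_imp_prime)
  finally show ?thesis .
qed

lemma sum_ln_primes_dvd_le:
  assumes "n > 0" "finite A" "\<And>p. p \<in> A \<Longrightarrow> prime p \<and> p dvd n"
  shows "(\<Sum>p\<in>A. ln (real p)) \<le> ln (real n)"
proof -
  have sub: "A \<subseteq> prime_factors n" using assms by (auto intro: prime_factorsI)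
  have "(\<Sum>p\<in>A. ln (real p)) \<le> (\<Sum>p\<in>A. real (multiplicity p n) * ln (real p))"
  proof (rule sum_mono)
    fix p assume "p \<in> A"
    then have "prime p" "p dvd n" using assms by auto
    then have "multiplicity p n > 0" using assms(1)
      by (simp add: prime_multiplicity_gt_zero_iff)
    then have "real (multiplicity p n) \<ge> 1" by simp
    moreover have "ln (real p) \<ge> 0" using prime_ge_1_nat[OF \<open>prime p\<close>] by simp
    ultimately show "ln (real p) \<le> real (multiplicity p n) * ln (real p)"
      using mult_right_mono[of 1 "real (multiplicity p n)" "ln (real p)"] by simp
  qed
  also have "\<dots> \<le> (\<Sum>p\<in>prime_factors n. real (multiplicity p n) * ln (real p))"
    using sub by (intro sum_mono2) (auto intro!: mult_nonneg_nonneg ln_prime_ge0)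
  also have "\<dots> = ln (real n)" using ln_nat_factor[OF assms(1)] by simp
  finally show ?thesis .
qed

lemma thetaf_mono: "x \<le> y \<Longrightarrow> thetaf x \<le> thetaf y"
  unfolding thetaf_def
  by (rule sum_mono2[OF finite_primes_le]) (auto simp: prime_gt_0_nat)

lemma thetaf_upper: "thetaf x \<le> real x * ln 4"
proof (induction x rule: less_induct)
  case (less x)
  show ?case
  proof (cases "x \<le> 2")
    case True
    then have "{p. prime p \<and> p \<le> x} \<subseteq> {2}"
      by (auto dest: prime_ge_2_nat)
    then have "thetaf x \<le> (\<Sum>p\<in>{2::nat}. ln (real p))"
      unfolding thetaf_def by (intro sum_mono2) auto
    also have "\<dots> = ln 2" by simp
    finally have t: "thetaf x \<le> ln 2" .
    show ?thesis
    proof (cases "x = 2")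
      case True
      have l: "ln (2::real) \<le> ln 4" "0 \<le> ln (4::real)" by simp_all
      from t l have "thetaf x \<le> 2 * ln 4" by linarith
      with True show ?thesis by simp
    next
      case False
      have "{p. prime p \<and> p \<le> x} = {}"
      proof -
        { fix p assume "prime p" "p \<le> x"
          then have "p \<ge> 2" by (simp add: prime_ge_2_nat)
          with \<open>p \<le> x\<close> \<open>x \<le> 2\<close> False have False by simp }
        then show ?thesis by auto
      qed
      then have "thetaf x = 0" unfolding thetaf_def by (simp only: sum.empty)
      then show ?thesis by simp
    qed
  next
    case False
    show ?thesis
    proof (cases "even x")
      case True
      have "\<not> prime x" using True False prime_odd_nat[of x] by auto
      have "{p. prime p \<and> p \<le> x} = {p. prime p \<and> p \<le> x - 1}"
      proof (intro Collect_cong iffI conjI)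
        fix p assume "prime p \<and> p \<le> x"
        then have "p \<noteq> x" "p \<le> x" using \<open>\<not> prime x\<close> by auto
        then show "p \<le> x - 1" by linarith
      qed auto
      then have "thetaf x = thetaf (x - 1)" by (simp add: thetaf_def)
      also have "\<dots> \<le> real (x - 1) * ln 4" using less[of "x - 1"] False by simp
      also have "\<dots> \<le> real x * ln 4" by (intro mult_right_mono) auto
      finally show ?thesis .
    next
      case odd: False
      then obtain m where x: "x = 2 * m + 1" by (metis oddE)
      with False have m1: "m \<ge> 1" by simp
      define A where "A = {p. prime p \<and> m + 1 < p \<and> p \<le> x}"
      have split: "{p. prime p \<and> p \<le> x} = {p. prime p \<and> p \<le> m + 1} \<union> A"
        using x by (auto simp: A_def)
      have finA: "finite A" unfolding A_def by (rule finite_subset[OF _ finite_primes_le[of x]]) auto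
      have "thetaf x = thetaf (m + 1) + (\<Sum>p\<in>A. ln (real p))"
        unfolding thetaf_def split
        by (rule sum.union_disjoint[OF finite_primes_le finA]) (auto simp: A_def)
      also have "(\<Sum>p\<in>A. ln (real p)) \<le> ln (real (x choose m))"
      proof (rule sum_ln_primes_dvd_le)
        show "0 < x choose m" using x by simp
        show "finite A" by (rule finA)
        fix p assume "p \<in> A"
        then have p: "prime p" "m + 1 < p" "p \<le> x" by (auto simp: A_def)
        have fe: "fact m * fact (x - m) * (x choose m) = (fact x :: nat)"
          using x by (intro binomial_fact_lemma) simp
        have "p dvd fact x" using p prime_dvd_fact_iff by blast
        then have "p dvd fact m * fact (x - m) * (x choose m)" using fe by simp
        moreover have "\<not> p dvd fact m" by (subst prime_dvd_fact_iff[OF p(1)]) (use p in simp)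
        moreover have "\<not> p dvd fact (x - m)" by (subst prime_dvd_fact_iff[OF p(1)]) (use p x in simp)
        ultimately have "p dvd (x choose m)" using p(1) by (simp add: prime_dvd_mult_iff)
        then show "prime p \<and> p dvd (x choose m)" using p by simp
      qed
      also have "ln (real (x choose m)) \<le> ln (4 ^ m)"
      proof -
        have "(x choose m) \<le> (\<Sum>k\<le>m. (2 * m + 1 choose k))"
          unfolding x by (rule member_le_sum) auto
        also have "\<dots> = 4 ^ m" using binomial_r_part_sum[of m] by (simp add: power_mult)
        finally have "real (x choose m) \<le> real (4 ^ m)" by (simp only: of_nat_le_iff)
        then have "real (x choose m) \<le> 4 ^ m" by simp
        then show ?thesis using x by (subst ln_le_cancel_iff) auto
      qed
      also have "thetaf (m + 1) \<le> real (m + 1) * ln 4" using less[of "m+1"] x m1 by simp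
      finally have "thetaf x \<le> real (m+1) * ln 4 + ln (4 ^ m)" by simp
      also have "\<dots> = real x * ln 4" using x by (simp add: ln_realpow algebra_simps)
      finally show ?thesis .
    qed
  qed
qed


lemma card_sq_le:
  "real (card {p::nat. 0 < p \<and> p * p \<le> x}) \<le> sqrt (real x)"
proof -
  define s where "s = nat \<lfloor>sqrt (real x)\<rfloor>"
  have "{p::nat. 0 < p \<and> p * p \<le> x} \<subseteq> {1..s}"
  proof
    fix p assume "p \<in> {p::nat. 0 < p \<and> p * p \<le> x}"
    then have p: "0 < p" "p * p \<le> x" by auto
    then have "(real p)^2 \<le> real x" by (simp add: power2_eq_square flip: of_nat_mult)
    then have "real p \<le> sqrt (real x)" by (rule real_le_rsqrt)
    then have "p \<le> s" unfolding s_def by (simp add: le_nat_floor)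
    with p show "p \<in> {1..s}" by auto
  qed
  then have "card {p::nat. 0 < p \<and> p * p \<le> x} \<le> card {1..s}" by (intro card_mono) auto
  also have "card {1..s} = s" by simp
  finally have "real (card {p::nat. 0 < p \<and> p * p \<le> x}) \<le> real s" by simp
  also have "real s \<le> sqrt (real x)" unfolding s_def by simp
  finally show ?thesis .
qed

lemma card_primes_sq_le:
  "real (card {p. p \<in> A \<and> prime p \<and> p * p \<le> x}) \<le> sqrt (real x)"
proof -
  have "card {p. p \<in> A \<and> prime p \<and> p * p \<le> x} \<le> card {p::nat. 0 < p \<and> p * p \<le> x}"
  proof (rule card_mono)
    show "finite {p::nat. 0 < p \<and> p * p \<le> x}"
    proof (rule finite_subset[of _ "{..x}"])
      show "{p::nat. 0 < p \<and> p * p \<le> x} \<subseteq> {..x}"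
      proof
        fix p :: nat assume "p \<in> {p::nat. 0 < p \<and> p * p \<le> x}"
        then have "0 < p" "p * p \<le> x" by auto
        moreover have "p \<le> p * p" using \<open>0 < p\<close> by simp
        ultimately have "p \<le> x" by linarith
        then show "p \<in> {..x}" by simp
      qed
    qed simp
  qed (auto simp: prime_gt_0_nat)
  then show ?thesis using card_sq_le[of x] by linarith
qed

lemma ln_le_2sqrt: "x > 0 \<Longrightarrow> ln x \<le> 2 * sqrt (x::real)"
proof -
  assume "x > 0"
  have "ln (sqrt x) \<le> sqrt x - 1" using \<open>x > 0\<close> by (intro ln_le_minus_one) simp
  moreover have "ln (sqrt x) = ln x / 2" using \<open>x > 0\<close> by (simp add: ln_sqrt)
  ultimately show ?thesis by linarith
qed

lemma sqrt_ln_le: "x > 0 \<Longrightarrow> sqrt x * ln x \<le> 2 * (x::real)"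
proof -
  assume x: "x > 0"
  have "sqrt x * ln x \<le> sqrt x * (2 * sqrt x)"
    using ln_le_2sqrt[OF x] x by (intro mult_left_mono) auto
  also have "\<dots> = 2 * x" using x by (simp add: algebra_simps)
  finally show ?thesis .
qed

lemma pif_upper: "real (pif x) * ln (real x) \<le> 8 * real x"
proof (cases "x \<le> 1")
  case True
  have "{p. prime p \<and> p \<le> x} = {}"
  proof -
    { fix p assume "prime p" "p \<le> x"
      then have "p \<ge> 2" by (simp add: prime_ge_2_nat)
      with \<open>p \<le> x\<close> True have False by simp }
    then show ?thesis by auto
  qed
  then have "pif x = 0" unfolding pif_def by (simp only: card.empty)
  then show ?thesis by simp
next
  case False
  then have x: "real x \<ge> 2" by simp
  define P1 where "P1 = {p. p \<in> {p. prime p \<and> p \<le> x} \<and> prime p \<and> p * p \<le> x}"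
  define P2 where "P2 = {p. prime p \<and> p \<le> x \<and> \<not> p * p \<le> x}"
  have split: "{p. prime p \<and> p \<le> x} = P1 \<union> P2" by (auto simp: P1_def P2_def)
  have fin1: "finite P1" unfolding P1_def by (rule finite_subset[OF _ finite_primes_le[of x]]) auto
  have fin2: "finite P2" unfolding P2_def by (rule finite_subset[OF _ finite_primes_le[of x]]) auto
  have "pif x = card P1 + card P2" unfolding pif_def split
    by (rule card_Un_disjoint[OF fin1 fin2]) (auto simp: P1_def P2_def)
  then have "real (pif x) * ln x = real (card P1) * ln x + real (card P2) * ln x"
    by (simp add: algebra_simps)
  also have "real (card P1) * ln x \<le> sqrt x * ln x"
    using card_primes_sq_le[of "{p. prime p \<and> p \<le> x}" x] x unfolding P1_def
    by (intro mult_right_mono) auto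
  also have "real (card P2) * ln x \<le> 2 * thetaf x"
  proof -
    have "real (card P2) * ln x = (\<Sum>p\<in>P2. ln (real x))" by simp
    also have "\<dots> \<le> (\<Sum>p\<in>P2. 2 * ln (real p))"
    proof (rule sum_mono)
      fix p assume "p \<in> P2"
      then have "x < p * p" "prime p" by (auto simp: P2_def)
      then have "real x < real p ^ 2" by (simp add: power2_eq_square flip: of_nat_mult)
      then have "ln (real x) < ln (real p ^ 2)" using x prime_gt_0_nat[OF \<open>prime p\<close>] by (subst ln_less_cancel_iff) auto
      also have "\<dots> = 2 * ln (real p)" using \<open>prime p\<close> prime_gt_0_nat by (simp add: ln_realpow)
      finally show "ln (real x) \<le> 2 * ln (real p)" by simp
    qed
    also have "\<dots> = 2 * (\<Sum>p\<in>P2. ln (real p))" by (simp add: sum_distrib_left)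
    also have "(\<Sum>p\<in>P2. ln (real p)) \<le> thetaf x" unfolding thetaf_def
      by (rule sum_mono2[OF finite_primes_le]) (auto simp: P2_def ln_prime_ge0)
    finally show ?thesis by simp
  qed
  also have "sqrt x * ln x \<le> 2 * real x" using x by (intro sqrt_ln_le) simp
  also have "thetaf x \<le> real x * ln 4" by (rule thetaf_upper)
  also have "ln (4::real) \<le> 3" using ln_le_minus_one[of 4] by simp
  then have "real x * ln 4 \<le> real x * 3" by (intro mult_left_mono) auto
  finally show ?thesis by simp
qed


lemma Suc_div_eq: "Suc n div d = n div d + (if d dvd Suc n then 1 else 0)"
  by (simp add: div_Suc dvd_eq_mod_eq_0)

lemma sum_if_card: "finite A \<Longrightarrow> (\<Sum>x\<in>A. if P x then 1 else 0) = card {x\<in>A. P x}"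
  by (simp add: sum.inter_filter[symmetric])

lemma legendre:
  assumes p: "prime (p::nat)"
  shows "multiplicity p (fact n) = (\<Sum>k\<in>{1..n}. n div p ^ k)"
proof (induction n)
  case 0
  then show ?case by simp
next
  case (Suc n)
  have p1: "Suc 0 < p" using p prime_gt_1_nat by simp
  have "multiplicity p (fact (Suc n) :: nat) = multiplicity p (Suc n * fact n)"
    by (simp add: fact_Suc)
  also have "\<dots> = multiplicity p (Suc n) + multiplicity p (fact n :: nat)"
    using p by (intro prime_elem_multiplicity_mult_distrib) auto
  finally have eq1: "multiplicity p (fact (Suc n) :: nat) = multiplicity p (Suc n) + (\<Sum>k\<in>{1..n}. n div p ^ k)"
    using Suc by simp
  have "(\<Sum>k\<in>{1..Suc n}. Suc n div p ^ k) = (\<Sum>k\<in>{1..Suc n}. n div p ^ k + (if p ^ k dvd Suc n then 1 else 0))"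
    by (rule sum.cong[OF refl]) (rule Suc_div_eq)
  also have "\<dots> = (\<Sum>k\<in>{1..Suc n}. n div p ^ k) + (\<Sum>k\<in>{1..Suc n}. (if p ^ k dvd Suc n then 1 else 0))"
    by (rule sum.distrib)
  also have "(\<Sum>k\<in>{1..Suc n}. n div p ^ k) = (\<Sum>k\<in>{1..n}. n div p ^ k)"
  proof -
    have "n < p ^ Suc n" using power_gt_expt[OF p1, of "Suc n"] by simp
    then show ?thesis by simp
  qed
  also have "(\<Sum>k\<in>{1..Suc n}. (if p ^ k dvd Suc n then 1 else 0)) = card {k\<in>{1..Suc n}. p ^ k dvd Suc n}"
    by (rule sum_if_card) simp
  also have "{k\<in>{1..Suc n}. p ^ k dvd Suc n} = {1..multiplicity p (Suc n)}"
  proof -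
    have iff: "p ^ k dvd Suc n \<longleftrightarrow> k \<le> multiplicity p (Suc n)" for k
      using p by (intro power_dvd_iff_le_multiplicity) auto
    have "p ^ multiplicity p (Suc n) dvd Suc n" by (simp add: multiplicity_dvd)
    then have "p ^ multiplicity p (Suc n) \<le> Suc n" by (rule dvd_imp_le) simp
    moreover have "multiplicity p (Suc n) < p ^ multiplicity p (Suc n)" by (rule power_gt_expt[OF p1])
    ultimately have le: "multiplicity p (Suc n) \<le> Suc n" by simp
    show ?thesis
    proof (rule set_eqI)
      fix k show "k \<in> {k\<in>{1..Suc n}. p ^ k dvd Suc n} \<longleftrightarrow> k \<in> {1..multiplicity p (Suc n)}"
        using iff[of k] le by auto
    qed
  qed
  finally have fin: "(\<Sum>k\<in>{1..Suc n}. Suc n div p ^ k) = (\<Sum>k\<in>{1..n}. n div p ^ k) + card {1..multiplicity p (Suc n)}" .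
  have c: "card {1..multiplicity p (Suc n)} = multiplicity p (Suc n)" by simp
  show ?case using eq1 c fin by linarith
qed

lemma card_pow_le_ln:
  assumes p: "prime (p::nat)" and y: "y \<ge> 1"
  shows "real (card {k\<in>{1..N}. p ^ k \<le> y}) * ln (real p) \<le> ln (real y)"
proof -
  have lp: "ln (real p) > 0" using ln_prime_gt0[OF p] .
  define r where "r = ln (real y) / ln (real p)"
  have r0: "r \<ge> 0" unfolding r_def using lp y by simp
  have "{k\<in>{1..N}. p ^ k \<le> y} \<subseteq> {1..nat \<lfloor>r\<rfloor>}"
  proof
    fix k assume "k \<in> {k\<in>{1..N}. p ^ k \<le> y}"
    then have k: "k \<ge> 1" "p ^ k \<le> y" by auto
    then have "real p ^ k \<le> real y" by (metis of_nat_le_iff of_nat_power)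
    then have "ln (real p ^ k) \<le> ln (real y)" using p prime_gt_0_nat[OF p] y
      by (subst ln_le_cancel_iff) auto
    then have "real k * ln (real p) \<le> ln (real y)" using prime_gt_0_nat[OF p] by (simp add: ln_realpow)
    then have "real k \<le> r" unfolding r_def using lp by (simp add: field_simps)
    then have "k \<le> nat \<lfloor>r\<rfloor>" by (simp add: le_nat_floor)
    then show "k \<in> {1..nat \<lfloor>r\<rfloor>}" using k by simp
  qed
  then have "card {k\<in>{1..N}. p ^ k \<le> y} \<le> card {1..nat \<lfloor>r\<rfloor>}" by (intro card_mono) auto
  then have "real (card {k\<in>{1..N}. p ^ k \<le> y}) \<le> real (nat \<lfloor>r\<rfloor>)" by simp
  also have "\<dots> \<le> r" using r0 by simp
  finally have "real (card {k\<in>{1..N}. p ^ k \<le> y}) * ln (real p) \<le> r * ln (real p)"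
    using lp by (intro mult_right_mono) auto
  also have "\<dots> = ln (real y)" unfolding r_def using lp by simp
  finally show ?thesis .
qed

lemma two_div_le: "(d::nat) > 0 \<Longrightarrow> (2 * m) div d \<le> 2 * (m div d) + (if d \<le> 2 * m then 1 else 0)"
proof -
  assume d: "d > 0"
  show ?thesis
  proof (cases "d \<le> 2 * m")
    case False
    then show ?thesis by simp
  next
    case True
    have "m = d * (m div d) + m mod d" by simp
    moreover have "m mod d < d" using d by simp
    ultimately have "2 * m < 2 * (d * (m div d)) + 2 * d" by linarith
    also have "\<dots> = d * (2 * (m div d) + 2)" by (simp add: algebra_simps)
    finally have "2 * m < d * (2 * (m div d) + 2)" .
    then have "(2 * m) div d < 2 * (m div d) + 2" using d by (simp add: div_less_iff_less_mult mult.commute)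
    then show ?thesis using True by simp
  qed
qed

lemma mult_central_binom:
  assumes p: "prime (p::nat)" and m: "m \<ge> 1"
  shows "real (multiplicity p (2 * m choose m)) * ln (real p) \<le> ln (real (2 * m))"
proof -
  have p1: "Suc 0 < p" using p prime_gt_1_nat by simp
  define C where "C = 2 * m choose m"
  have fe: "fact m * fact (2 * m - m) * C = (fact (2 * m) :: nat)"
    unfolding C_def by (intro binomial_fact_lemma) simp
  then have fe': "fact (2 * m) = (fact m * fact m) * C" by simp
  have C0: "C \<noteq> 0" unfolding C_def by simp
  have "multiplicity p (fact (2 * m) :: nat) = multiplicity p (fact m * fact m :: nat) + multiplicity p C"
    unfolding fe' using p C0 by (intro prime_elem_multiplicity_mult_distrib) auto
  also have "multiplicity p (fact m * fact m :: nat) = 2 * multiplicity p (fact m :: nat)"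
    using p by (subst prime_elem_multiplicity_mult_distrib) auto
  finally have e1: "multiplicity p C + 2 * multiplicity p (fact m :: nat) = multiplicity p (fact (2 * m) :: nat)"
    by simp
  have e2: "multiplicity p (fact m :: nat) = (\<Sum>k\<in>{1..2*m}. m div p ^ k)"
  proof -
    have "(\<Sum>k\<in>{1..2*m}. m div p ^ k) = (\<Sum>k\<in>{1..m}. m div p ^ k)"
    proof (rule sum.mono_neutral_right)
      show "\<forall>i\<in>{1..2 * m} - {1..m}. m div p ^ i = 0"
      proof
        fix i assume "i \<in> {1..2 * m} - {1..m}"
        then have "m < i" by auto
        also have "i < p ^ i" by (rule power_gt_expt[OF p1])
        finally show "m div p ^ i = 0" by simp
      qed
    qed auto
    then show ?thesis using legendre[OF p, of m] by simp
  qed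
  have "multiplicity p (fact (2 * m) :: nat) = (\<Sum>k\<in>{1..2*m}. (2 * m) div p ^ k)"
    by (rule legendre[OF p])
  also have "\<dots> \<le> (\<Sum>k\<in>{1..2*m}. 2 * (m div p ^ k) + (if p ^ k \<le> 2 * m then 1 else 0))"
    by (rule sum_mono) (rule two_div_le, use p1 in simp)
  also have "\<dots> = 2 * (\<Sum>k\<in>{1..2*m}. m div p ^ k) + card {k\<in>{1..2*m}. p ^ k \<le> 2 * m}"
    by (simp only: sum.distrib sum_distrib_left sum_if_card[OF finite_atLeastAtMost])
  finally have "multiplicity p C \<le> card {k\<in>{1..2*m}. p ^ k \<le> 2 * m}"
    using e1 e2 by linarith
  then have "real (multiplicity p C) * ln (real p) \<le> real (card {k\<in>{1..2*m}. p ^ k \<le> 2 * m}) * ln (real p)"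
    using ln_prime_ge0[OF p] by (intro mult_right_mono) auto
  also have "\<dots> \<le> ln (real (2 * m))" using m by (intro card_pow_le_ln p) simp
  finally show ?thesis unfolding C_def .
qed


lemma ln_central_binom_le:
  assumes m: "m \<ge> 1"
  shows "ln (real (2 * m choose m)) \<le> thetaf (2 * m) + sqrt (real (2 * m)) * ln (real (2 * m))"
proof -
  define C where "C = 2 * m choose m"
  define F where "F = prime_factors C"
  have C0: "C > 0" unfolding C_def by simp
  have fe: "fact m * fact (2 * m - m) * C = (fact (2 * m) :: nat)"
    unfolding C_def by (intro binomial_fact_lemma) simp
  have finF: "finite F" unfolding F_def by simp
  have Fp: "prime p \<and> p \<le> 2 * m" if "p \<in> F" for p
  proof -
    have pp: "prime p" "p dvd C" using that unfolding F_def by auto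
    then have "p dvd fact m * fact (2 * m - m) * C" by simp
    then have "p dvd (fact (2 * m) :: nat)" using fe by simp
    then have "p \<le> 2 * m" using prime_dvd_fact_iff[OF pp(1)] by simp
    then show ?thesis using pp by simp
  qed
  have l2m: "ln (real (2 * m)) \<ge> 0" using m by simp
  have pt: "real (multiplicity p C) * ln (real p) \<le> ln (real p) + (if p * p \<le> 2 * m then ln (real (2 * m)) else 0)"
    if "p \<in> F" for p
  proof -
    have p: "prime p" using Fp[OF that] by simp
    have v: "real (multiplicity p C) * ln (real p) \<le> ln (real (2 * m))"
      unfolding C_def by (rule mult_central_binom[OF p m])
    have lp: "ln (real p) > 0" by (rule ln_prime_gt0[OF p])
    show ?thesis
    proof (cases "p * p \<le> 2 * m")
      case True
      then show ?thesis using v lp by simp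
    next
      case False
      then have "real (2 * m) < real p ^ 2" by (simp add: power2_eq_square flip: of_nat_mult)
      then have "ln (real (2 * m)) < ln (real p ^ 2)" using m prime_gt_0_nat[OF p] by (subst ln_less_cancel_iff) auto
      also have "\<dots> = 2 * ln (real p)" using prime_gt_0_nat[OF p] by (simp add: ln_realpow)
      finally have "real (multiplicity p C) * ln (real p) < 2 * ln (real p)" using v by simp
      then have "real (multiplicity p C) < 2" using lp by simp
      then have "multiplicity p C \<le> 1" by simp
      then have "real (multiplicity p C) * ln (real p) \<le> 1 * ln (real p)"
        using lp by (intro mult_right_mono) auto
      then show ?thesis using False by simp
    qed
  qed
  have "ln (real C) = (\<Sum>p\<in>F. real (multiplicity p C) * ln (real p))"
    unfolding F_def by (rule ln_nat_factor[OF C0])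
  also have "\<dots> \<le> (\<Sum>p\<in>F. ln (real p) + (if p * p \<le> 2 * m then ln (real (2 * m)) else 0))"
    by (rule sum_mono) (rule pt)
  also have "\<dots> = (\<Sum>p\<in>F. ln (real p)) + (\<Sum>p\<in>F. (if p * p \<le> 2 * m then ln (real (2 * m)) else 0))"
    by (rule sum.distrib)
  also have "(\<Sum>p\<in>F. ln (real p)) \<le> thetaf (2 * m)"
    unfolding thetaf_def
  proof (rule sum_mono2[OF finite_primes_le])
    show "F \<subseteq> {p. prime p \<and> p \<le> 2 * m}" using Fp by blast
  qed (auto intro: ln_prime_ge0)
  also have "(\<Sum>p\<in>F. (if p * p \<le> 2 * m then ln (real (2 * m)) else 0)) = (\<Sum>p\<in>{p\<in>F. p * p \<le> 2 * m}. ln (real (2 * m)))"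
    by (rule sum.inter_filter[OF finF, symmetric])
  also have "\<dots> = real (card {p\<in>F. p * p \<le> 2 * m}) * ln (real (2 * m))" by simp
  also have "{p\<in>F. p * p \<le> 2 * m} = {p. p \<in> F \<and> prime p \<and> p * p \<le> 2 * m}" using Fp by blast
  also have "real (card {p. p \<in> F \<and> prime p \<and> p * p \<le> 2 * m}) * ln (real (2 * m)) \<le> sqrt (real (2 * m)) * ln (real (2 * m))"
    using l2m by (intro mult_right_mono card_primes_sq_le) 
  finally show ?thesis unfolding C_def by simp
qed

lemma central_binom_ge:
  assumes m: "m \<ge> 1"
  shows "real m * ln 2 \<le> ln (real (2 * m choose m))"
proof -
  have "(real (2 * m) / real m) ^ m \<le> real (2 * m choose m)"
    by (rule binomial_ge_n_over_k_pow_k) simp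
  moreover have "real (2 * m) / real m = 2" using m by simp
  ultimately have "2 ^ m \<le> real (2 * m choose m)" by simp
  then have "ln (2 ^ m) \<le> ln (real (2 * m choose m))" by (subst ln_le_cancel_iff) auto
  then show ?thesis by (simp add: ln_realpow)
qed

lemma theta_lower_2m:
  assumes m: "m \<ge> 1"
  shows "real m * ln 2 - sqrt (real (2 * m)) * ln (real (2 * m)) \<le> thetaf (2 * m)"
  using central_binom_ge[OF m] ln_central_binom_le[OF m] by linarith

lemma theta_lower_ev: "eventually (\<lambda>y::real. y / 10 \<le> (y - 1) / 2 * ln 2 - sqrt y * ln y) at_top"
proof -
  have "filterlim (\<lambda>y::real. (y - 1) / 3 - sqrt y * ln y - y / 10) at_top at_top"
    by real_asymp
  then have "eventually (\<lambda>y::real. 0 \<le> (y - 1) / 3 - sqrt y * ln y - y / 10) at_top"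
    unfolding filterlim_at_top by (rule allE)
  moreover have "eventually (\<lambda>y::real. y \<ge> 1) at_top" by (rule eventually_ge_at_top)
  ultimately show ?thesis
  proof eventually_elim
    case (elim y)
    have "(y - 1) / 3 = (y - 1) / 2 * (2 / 3)" by simp
    also have "\<dots> \<le> (y - 1) / 2 * ln 2" using elim ln2_ge_two_thirds by (intro mult_left_mono) auto
    finally show ?case using elim by linarith
  qed
qed

lemma theta_lower: "\<exists>N. \<forall>x\<ge>N. real x / 10 \<le> thetaf x"
proof -
  obtain N0 where N0: "\<And>y. y \<ge> N0 \<Longrightarrow> y / 10 \<le> (y - 1) / 2 * ln 2 - sqrt y * ln y"
    using theta_lower_ev unfolding eventually_at_top_linorder by blast
  define N where "N = max 2 (nat \<lceil>N0\<rceil>)"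
  have "real x / 10 \<le> thetaf x" if x: "x \<ge> N" for x
  proof -
    define m where "m = x div 2"
    have x2: "x \<ge> 2" using x unfolding N_def by simp
    have m1: "m \<ge> 1" using x2 unfolding m_def by simp
    have mx: "2 * m \<le> x" "real x - 1 \<le> 2 * real m" unfolding m_def by linarith+
    have "real x \<ge> N0" using x unfolding N_def by linarith
    then have "real x / 10 \<le> (real x - 1) / 2 * ln 2 - sqrt (real x) * ln (real x)" by (rule N0)
    also have "(real x - 1) / 2 * ln 2 \<le> real m * ln 2" using mx by (intro mult_right_mono) auto
    also have "sqrt (real (2 * m)) * ln (real (2 * m)) \<le> sqrt (real x) * ln (real x)"
      using mx m1 by (intro mult_mono) auto
    then have "real m * ln 2 - sqrt (real x) * ln (real x) \<le> real m * ln 2 - sqrt (real (2 * m)) * ln (real (2 * m))"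
      by simp
    also have "\<dots> \<le> thetaf (2 * m)" by (rule theta_lower_2m[OF m1])
    also have "\<dots> \<le> thetaf x" using mx by (intro thetaf_mono) simp
    finally show ?thesis by simp
  qed
  then show ?thesis by blast
qed


lemma ln_ratio_le_card:
  assumes p: "p > 0" "p \<le> q"
  shows "ln (real q / real p) \<le> ln 2 * real (card {j\<in>{..<q}. p * 2 ^ j \<le> q})"
proof -
  define y where "y = real q / real p"
  have y1: "y \<ge> 1" unfolding y_def using p by simp
  have ly: "log 2 y \<ge> 0" using y1 by simp
  define t where "t = nat \<lfloor>log 2 y\<rfloor>"
  have sub: "{..t} \<subseteq> {j\<in>{..<q}. p * 2 ^ j \<le> q}"
  proof
    fix j assume "j \<in> {..t}"
    then have "j \<le> t" by simp
    then have "real j \<le> log 2 y" unfolding t_def using ly by linarith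
    then have "2 powr real j \<le> y" using y1 by (subst (asm) le_log_iff) auto
    then have "2 ^ j \<le> y" by (simp add: powr_realpow)
    then have "real p * 2 ^ j \<le> real q" unfolding y_def using p by (simp add: field_simps)
    then have pj: "p * 2 ^ j \<le> q" by (metis of_nat_le_iff of_nat_mult of_nat_numeral of_nat_power)
    have "j < 2 ^ j" by simp
    also have "2 ^ j \<le> p * 2 ^ j" using p by simp
    finally have "j < q" using pj by linarith
    then show "j \<in> {j\<in>{..<q}. p * 2 ^ j \<le> q}" using pj by simp
  qed
  have "card {..t} \<le> card {j\<in>{..<q}. p * 2 ^ j \<le> q}" by (rule card_mono[OF _ sub]) simp
  then have c: "real t + 1 \<le> real (card {j\<in>{..<q}. p * 2 ^ j \<le> q})" by simp
  have "log 2 y \<le> real t + 1" unfolding t_def using ly by linarith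
  have "ln y = ln 2 * log 2 y" by (simp add: log_def)
  also have "\<dots> \<le> ln 2 * (real t + 1)" using \<open>log 2 y \<le> real t + 1\<close> by (intro mult_left_mono) auto
  also have "\<dots> \<le> ln 2 * real (card {j\<in>{..<q}. p * 2 ^ j \<le> q})" using c by (intro mult_left_mono) auto
  finally show ?thesis unfolding y_def .
qed

lemma pif_le_self: "pif y \<le> y"
proof -
  have "{p. prime p \<and> p \<le> y} \<subseteq> {1..y}"
  proof
    fix p assume "p \<in> {p. prime p \<and> p \<le> y}"
    then have "prime p" "p \<le> y" by auto
    then show "p \<in> {1..y}" using prime_gt_0_nat[of p] by auto
  qed
  then have "pif y \<le> card {1..y}" unfolding pif_def by (intro card_mono) auto
  then show ?thesis by simp
qed

lemma pif_bound:
  assumes q: "real q \<ge> 4" and yz: "real y \<le> z"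
  shows "real (pif y) \<le> 16 * z / ln (real q) + sqrt (sqrt (real q)) * sqrt z"
proof -
  have lq: "ln (real q) > 0" using q by simp
  have z0: "z \<ge> 0" using yz by (smt (verit) of_nat_0_le_iff)
  have t1: "16 * z / ln (real q) \<ge> 0" using lq z0 by simp
  have t2: "sqrt (sqrt (real q)) * sqrt z \<ge> 0" using z0 by simp
  show ?thesis
  proof (cases "q \<le> y * y")
    case True
    then have "real q \<le> real y * real y" by (simp flip: of_nat_mult)
    have "y \<ge> 2"
    proof (rule ccontr)
      assume "\<not> y \<ge> 2"
      then have "y \<le> 1" by simp
      then have "y * y \<le> 1 * 1" by (intro mult_le_mono) auto
      then show False using True q by simp
    qed
    then have y2: "real y \<ge> 2" by simp
    have "ln (real q) \<le> ln (real y * real y)" using \<open>real q \<le> real y * real y\<close> q by (subst ln_le_cancel_iff) auto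
    also have "\<dots> = 2 * ln (real y)" using y2 by (simp add: ln_mult)
    finally have lqy: "ln (real q) / 2 \<le> ln (real y)" by simp
    have ly: "ln (real y) > 0" using y2 by simp
    have "real (pif y) * ln (real y) \<le> 8 * real y" by (rule pif_upper)
    then have "real (pif y) \<le> 8 * real y / ln (real y)" using ly by (simp add: field_simps)
    also have "\<dots> \<le> 8 * real y / (ln (real q) / 2)"
      using lqy lq y2 by (intro divide_left_mono) auto
    also have "\<dots> = 16 * real y / ln (real q)" by simp
    also have "\<dots> \<le> 16 * z / ln (real q)" using yz lq by (intro divide_right_mono) auto
    finally show ?thesis using t2 by linarith
  next
    case False
    then have "real y * real y < real q" by (simp flip: of_nat_mult)
    then have "(sqrt (real y))^2 \<le> sqrt (real q)"
      by (simp add: real_le_rsqrt power2_eq_square)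
    then have s1: "sqrt (real y) \<le> sqrt (sqrt (real q))" by (rule real_le_rsqrt)
    have s2: "sqrt (real y) \<le> sqrt z" using yz by simp
    have "real (pif y) \<le> real y" using pif_le_self[of y] by simp
    also have "\<dots> = sqrt (real y) * sqrt (real y)" by simp
    also have "\<dots> \<le> sqrt (sqrt (real q)) * sqrt z" using s1 s2 by (intro mult_mono) auto
    finally show ?thesis using t1 by linarith
  qed
qed

lemma geom_half: "(\<Sum>j<n. (1/2::real)^j) \<le> 2"
  by (simp add: sum_gp_strict)

lemma geom_sqrt_half: "(\<Sum>j<n. (sqrt (1/2)::real)^j) \<le> 4"
proof -
  define r where "r = sqrt (1/2::real)"
  have "sqrt (1/2::real) \<le> sqrt ((3/4)^2)" by (subst real_sqrt_le_iff) (simp add: power2_eq_square)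
  then have r1: "r \<le> 3/4" unfolding r_def by simp
  have r0: "r \<ge> 0" unfolding r_def by simp
  have "r \<noteq> 1" using r1 by auto
  then have "(\<Sum>j<n. r^j) = (1 - r^n) / (1 - r)" by (simp add: sum_gp_strict)
  also have "\<dots> \<le> 1 / (1 - r)" using r1 r0 by (intro divide_right_mono) auto
  also have "\<dots> \<le> 4" using r1 by (simp add: field_simps)
  finally show ?thesis unfolding r_def .
qed

lemma mertens_like:
  assumes q: "q \<ge> 4"
  shows "(\<Sum>p\<in>{p. prime p \<and> p < q}. ln (real q / real p))
           \<le> 32 * real q / ln (real q) + 4 * sqrt (sqrt (real q)) * sqrt (real q)"
proof -
  define P where "P = {p. prime p \<and> p < q}"
  have finP: "finite P" unfolding P_def by (rule finite_subset[of _ "{..q}"]) auto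
  have lq: "ln (real q) > 0" using q by simp
  have "(\<Sum>p\<in>P. ln (real q / real p)) \<le> (\<Sum>p\<in>P. ln 2 * real (card {j\<in>{..<q}. p * 2 ^ j \<le> q}))"
    by (rule sum_mono) (rule ln_ratio_le_card, auto simp: P_def prime_gt_0_nat)
  also have "\<dots> = ln 2 * real (\<Sum>p\<in>P. card {j\<in>{..<q}. p * 2 ^ j \<le> q})"
    by (simp add: sum_distrib_left)
  also have "(\<Sum>p\<in>P. card {j\<in>{..<q}. p * 2 ^ j \<le> q}) = (\<Sum>j<q. card {p\<in>P. p * 2 ^ j \<le> q})"
  proof -
    have "(\<Sum>p\<in>P. card {j\<in>{..<q}. p * 2 ^ j \<le> q}) = (\<Sum>p\<in>P. \<Sum>j<q. if p * 2 ^ j \<le> q then 1 else 0)"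
      by (rule sum.cong[OF refl]) (rule sum_if_card[symmetric], simp)
    also have "\<dots> = (\<Sum>j<q. \<Sum>p\<in>P. if p * 2 ^ j \<le> q then 1 else 0)" by (rule sum.swap)
    also have "\<dots> = (\<Sum>j<q. card {p\<in>P. p * 2 ^ j \<le> q})"
      by (rule sum.cong[OF refl]) (rule sum_if_card[OF finP])
    finally show ?thesis .
  qed
  also have "real (\<Sum>j<q. card {p\<in>P. p * 2 ^ j \<le> q}) \<le> (\<Sum>j<q. real (pif (q div 2 ^ j)))"
    unfolding of_nat_sum
  proof (rule sum_mono)
    fix j
    have "{p\<in>P. p * 2 ^ j \<le> q} \<subseteq> {p. prime p \<and> p \<le> q div 2 ^ j}"
      by (auto simp: P_def less_eq_div_iff_mult_less_eq)
    then have "card {p\<in>P. p * 2 ^ j \<le> q} \<le> pif (q div 2 ^ j)"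
      unfolding pif_def by (rule card_mono[OF finite_primes_le])
    then show "real (card {p\<in>P. p * 2 ^ j \<le> q}) \<le> real (pif (q div 2 ^ j))" by simp
  qed
  also have "\<dots> \<le> (\<Sum>j<q. 16 * (real q * (1/2)^j) / ln (real q) + sqrt (sqrt (real q)) * sqrt (real q * (1/2)^j))"
  proof (rule sum_mono)
    fix j
    have "(q div 2 ^ j) * 2 ^ j \<le> q" by (rule div_times_less_eq_dividend)
    then have "real (q div 2 ^ j) * 2 ^ j \<le> real q" by (metis of_nat_le_iff of_nat_mult of_nat_numeral of_nat_power)
    then have "real (q div 2 ^ j) \<le> real q / 2 ^ j" by (simp add: field_simps)
    also have "\<dots> = real q * (1/2)^j" by (simp add: power_one_over field_simps)
    finally show "real (pif (q div 2 ^ j)) \<le> 16 * (real q * (1/2)^j) / ln (real q) + sqrt (sqrt (real q)) * sqrt (real q * (1/2)^j)"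
      using q by (intro pif_bound) auto
  qed
  also have "\<dots> = 16 * real q / ln (real q) * (\<Sum>j<q. (1/2)^j) + sqrt (sqrt (real q)) * sqrt (real q) * (\<Sum>j<q. (sqrt (1/2))^j)"
    by (simp add: sum.distrib sum_distrib_left sum_divide_distrib real_sqrt_mult real_sqrt_power algebra_simps)
  also have "\<dots> \<le> 16 * real q / ln (real q) * 2 + sqrt (sqrt (real q)) * sqrt (real q) * 4"
    using lq by (intro add_mono mult_left_mono geom_half geom_sqrt_half) auto
  finally have "(\<Sum>p\<in>P. ln (real q / real p)) \<le> ln 2 * (32 * real q / ln (real q) + 4 * sqrt (sqrt (real q)) * sqrt (real q))"
    by (simp add: algebra_simps)
  also have "\<dots> \<le> 1 * (32 * real q / ln (real q) + 4 * sqrt (sqrt (real q)) * sqrt (real q))"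
    using lq ln_le_minus_one[of 2] by (intro mult_right_mono) auto
  finally show ?thesis unfolding P_def by simp
qed


lemma bigOmega_sum: "n > 0 \<Longrightarrow> bigOmega n = (\<Sum>p\<in>prime_factors n. multiplicity p n)"
  unfolding bigOmega_def size_multiset_overloaded_eq
  by (rule sum.cong[OF refl]) (auto simp: count_prime_factorization)

lemma reduced_struct:
  assumes red: "reduced n" and n3: "n \<ge> 3"
  obtains q where "prime q" "q \<ge> 3"
    "ln (real n) = (\<Sum>p\<in>{p. prime p \<and> p < q}. real (multiplicity p n) * ln (real p))"
    "real (bigOmega n) = (\<Sum>p\<in>{p. prime p \<and> p < q}. real (multiplicity p n))"
    "\<And>p. prime p \<Longrightarrow> p < q \<Longrightarrow> p \<noteq> 2 \<Longrightarrow> multiplicity p n \<ge> 1"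
    "\<And>p. prime p \<Longrightarrow> p < q \<Longrightarrow> real (multiplicity p n) * ln (real p) \<le> 2 * ln (real q) + 3"
proof -
  have n0: "n > 0" using n3 by simp
  have R1: "\<And>p q. prime p \<Longrightarrow> prime q \<Longrightarrow> p \<noteq> 2 \<Longrightarrow> q \<noteq> 2 \<Longrightarrow>
        real_of_int \<lfloor>real (multiplicity p n + 1) / real (multiplicity q n + 2)\<rfloor> < ln (real q) / ln (real p)"
    using red unfolding reduced_def by blast
  have R2: "\<And>q. prime q \<Longrightarrow> multiplicity q n = 0 \<Longrightarrow> (2::nat) ^ multiplicity 2 n < 8 * q^2"
    using red unfolding reduced_def by blast
  define Q where "Q = (\<lambda>q::nat. prime q \<and> q \<noteq> 2 \<and> \<not> q dvd n)"
  obtain r where r: "prime r" "n < r" using bigger_prime by blast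
  have "\<not> r dvd n"
  proof
    assume "r dvd n"
    then have "r \<le> n" using n0 by (rule dvd_imp_le)
    then show False using r by simp
  qed
  then have "Q r" unfolding Q_def using r n3 by auto
  define q where "q = (LEAST q. Q q)"
  have Qq: "Q q" unfolding q_def by (rule LeastI[of Q r]) (rule \<open>Q r\<close>)
  then have q: "prime q" "q \<noteq> 2" "\<not> q dvd n" unfolding Q_def by auto
  have q3: "q \<ge> 3" using q prime_ge_2_nat[of q] by linarith
  have mq: "multiplicity q n = 0" using q(3) by (rule not_dvd_imp_multiplicity_0)
  have below: "p dvd n" if "prime p" "p \<noteq> 2" "p < q" for p
  proof (rule ccontr)
    assume "\<not> p dvd n"
    then have "Q p" unfolding Q_def using that by simp
    then have "q \<le> p" unfolding q_def by (rule Least_le)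
    then show False using that by simp
  qed
  have lq: "ln (real q) > 0" using q3 by simp
  have above: "p < q" if "prime p" "p dvd n" for p
  proof (rule ccontr)
    assume "\<not> p < q"
    moreover have "p \<noteq> q" using that(2) q(3) by auto
    ultimately have pq: "q < p" by simp
    have p2: "p \<noteq> 2" using pq q3 by simp
    have lp: "ln (real p) > 0" using ln_prime_gt0[OF that(1)] .
    have "ln (real q) < ln (real p)" using pq q3 by simp
    then have "ln (real q) / ln (real p) < 1" using lp by simp
    have "real_of_int \<lfloor>real (multiplicity p n + 1) / real (multiplicity q n + 2)\<rfloor> < ln (real q) / ln (real p)"
      by (rule R1[OF that(1) q(1) p2 q(2)])
    also have "\<lfloor>real (multiplicity p n + 1) / real (multiplicity q n + 2)\<rfloor> = int ((multiplicity p n + 1) div 2)"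
      unfolding mq using floor_divide_of_nat_eq[of "multiplicity p n + 1" 2] by simp
    finally have "real ((multiplicity p n + 1) div 2) < 1" using \<open>ln (real q) / ln (real p) < 1\<close> by simp
    then have "(multiplicity p n + 1) div 2 = 0" by simp
    then have "multiplicity p n = 0" by simp
    then show False using that n0 by (simp add: prime_elem_multiplicity_eq_zero_iff)
  qed
  define P where "P = {p. prime p \<and> p < q}"
  have finP: "finite P" unfolding P_def by (rule finite_subset[of _ "{..q}"]) auto
  have sub: "prime_factors n \<subseteq> P" unfolding P_def using above by auto
  have zero: "multiplicity p n = 0" if "p \<in> P - prime_factors n" for p
    using that n0 by (auto simp: P_def in_prime_factors_iff intro: not_dvd_imp_multiplicity_0)
  have e1: "ln (real n) = (\<Sum>p\<in>P. real (multiplicity p n) * ln (real p))"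
    unfolding ln_nat_factor[OF n0]
    by (rule sum.mono_neutral_left[OF finP sub]) (simp add: zero)
  have e2: "real (bigOmega n) = (\<Sum>p\<in>P. real (multiplicity p n))"
    unfolding bigOmega_sum[OF n0] of_nat_sum
    by (rule sum.mono_neutral_left[OF finP sub]) (simp add: zero)
  have e3: "multiplicity p n \<ge> 1" if "prime p" "p < q" "p \<noteq> 2" for p
  proof -
    have "p dvd n" using below that by blast
    then have "multiplicity p n > 0" using that n0 by (simp add: prime_multiplicity_gt_zero_iff)
    then show ?thesis by simp
  qed
  have ln8: "ln (8::real) \<le> 3"
  proof -
    have "ln (8::real) = ln (2 ^ 3)" by simp
    also have "\<dots> = 3 * ln 2" by (simp only: ln_realpow)
    finally have "ln (8::real) = 3 * ln 2" .
    moreover have "ln (2::real) \<le> 1" using ln_le_minus_one[of 2] by simp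
    ultimately show ?thesis by linarith
  qed
  have e4: "real (multiplicity p n) * ln (real p) \<le> 2 * ln (real q) + 3" if p: "prime p" "p < q" for p
  proof (cases "p = 2")
    case True
    have "(2::nat) ^ multiplicity 2 n < 8 * q^2" by (rule R2[OF q(1) mq])
    then have "real ((2::nat) ^ multiplicity 2 n) < real (8 * q^2)" by (simp only: of_nat_less_iff)
    then have "(2::real) ^ multiplicity 2 n < 8 * real q ^ 2" by simp
    then have "ln ((2::real) ^ multiplicity 2 n) < ln (8 * real q ^ 2)" using q3 by (subst ln_less_cancel_iff) auto
    also have "\<dots> = ln 8 + 2 * ln (real q)" using q3 by (simp add: ln_mult ln_realpow)
    finally have "real (multiplicity 2 n) * ln 2 < ln 8 + 2 * ln (real q)" by (simp add: ln_realpow)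
    then show ?thesis using True ln8 by simp
  next
    case False
    define k where "k = (multiplicity p n + 1) div 2"
    have lp: "ln (real p) > 0" using ln_prime_gt0[OF p(1)] .
    have "real_of_int \<lfloor>real (multiplicity p n + 1) / real (multiplicity q n + 2)\<rfloor> < ln (real q) / ln (real p)"
      by (rule R1[OF p(1) q(1) False q(2)])
    also have "\<lfloor>real (multiplicity p n + 1) / real (multiplicity q n + 2)\<rfloor> = int k"
      unfolding k_def mq using floor_divide_of_nat_eq[of "multiplicity p n + 1" 2] by simp
    finally have "real k < ln (real q) / ln (real p)" by simp
    then have "real k * ln (real p) < ln (real q)" using lp by (simp add: field_simps)
    moreover have "multiplicity p n \<le> 2 * k" unfolding k_def by simp
    then have "real (multiplicity p n) * ln (real p) \<le> real (2 * k) * ln (real p)"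
      using lp by (intro mult_right_mono) auto
    ultimately show ?thesis by simp
  qed
  show ?thesis
    using that[OF q(1) q3 e1[unfolded P_def] e2[unfolded P_def] e3 e4] .
qed


lemma small_arith:
  fixes Om L l D :: real
  assumes "0 \<le> Om" "Om \<le> 2 * L" "L > 0" "l > 0" "l \<le> D"
  shows "\<bar>Om - L / l\<bar> \<le> (2 * D^2 + D) * L / l^2"
proof -
  have "\<bar>Om - L / l\<bar> \<le> Om + L / l" using assms by (simp add: abs_le_iff)
  also have "\<dots> \<le> 2 * L + L / l" using assms by simp
  also have "\<dots> = (2 * l^2 + l) * L / l^2" using assms by (simp add: field_simps power2_eq_square)
  also have "\<dots> \<le> (2 * D^2 + D) * L / l^2"
  proof -
    have "l^2 \<le> D^2" using assms by (intro power_mono) auto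
    then have "2 * l^2 + l \<le> 2 * D^2 + D" using assms by linarith
    then show ?thesis using assms by (intro divide_right_mono mult_right_mono) auto
  qed
  finally show ?thesis .
qed

lemma large_arith:
  fixes Om L E Q l qq :: real
  assumes eq: "Om * Q = L + E" and E0: "0 \<le> E" and Eb: "E \<le> 200 * qq / Q" and qL: "qq \<le> 20 * L"
    and Q: "Q \<ge> 10" and l0: "l > 0" and lQ: "l \<le> 2 * Q" and d: "\<bar>l - Q\<bar> \<le> 5" and L0: "L > 0"
  shows "\<bar>Om - L / l\<bar> \<le> 16010 * L / l^2"
proof -
  have Q0: "Q > 0" using Q by simp
  have "Om - L / l = E / Q + L * (l - Q) / (Q * l)"
  proof -
    have Oe: "Om = (L + E) / Q" using eq Q0 by (simp add: field_simps)
    show ?thesis unfolding Oe using Q0 l0 by (simp add: field_simps)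
  qed
  then have "\<bar>Om - L / l\<bar> \<le> \<bar>E / Q\<bar> + \<bar>L * (l - Q) / (Q * l)\<bar>" using abs_triangle_ineq by (simp only:)
  also have "\<bar>E / Q\<bar> = E / Q" using E0 Q0 by simp
  also have "\<bar>L * (l - Q) / (Q * l)\<bar> = L * \<bar>l - Q\<bar> / (Q * l)" using L0 Q0 l0 by (simp add: abs_mult)
  also have "L * \<bar>l - Q\<bar> / (Q * l) \<le> L * 5 / (Q * l)" using d L0 Q0 l0
    by (intro divide_right_mono mult_left_mono) auto
  finally have main: "\<bar>Om - L / l\<bar> \<le> E / Q + L * 5 / (Q * l)" by simp
  have iq: "1 / Q \<le> 2 / l" using lQ l0 Q0 by (simp add: field_simps)
  have "L * 5 / (Q * l) = 5 * L * (1 / Q) * (1 / l)" by simp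
  also have "\<dots> \<le> 5 * L * (2 / l) * (1 / l)" using iq L0 l0 by (intro mult_right_mono mult_left_mono) auto
  also have "\<dots> = 10 * L / l^2" by (simp add: power2_eq_square)
  finally have t2: "L * 5 / (Q * l) \<le> 10 * L / l^2" .
  have "E / Q \<le> 200 * qq / Q / Q" using Eb Q0 by (intro divide_right_mono) auto
  also have "\<dots> \<le> 200 * (20 * L) / Q / Q" using qL Q0 by (intro divide_right_mono mult_left_mono) auto
  also have "\<dots> = 4000 * L * (1 / Q) * (1 / Q)" by simp
  also have "\<dots> \<le> 4000 * L * (2 / l) * (2 / l)" using iq L0 l0 Q0
    by (intro mult_mono mult_left_mono) auto
  also have "\<dots> = 16000 * L / l^2" by (simp add: power2_eq_square)
  finally have t1: "E / Q \<le> 16000 * L / l^2" .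
  show ?thesis using t1 t2 main by simp
qed


lemma ev_lim_ge: "filterlim (f::real \<Rightarrow> real) at_top at_top \<Longrightarrow> eventually (\<lambda>y. 0 \<le> f y) at_top"
  unfolding filterlim_at_top by (rule allE)

lemma final_ev: "eventually (\<lambda>y::real. 10 \<le> ln y \<and> y / 20 \<le> (y - 1) / 10 - 1 \<and>
   20 * sqrt (sqrt y) * sqrt y + 2 * sqrt y * (2 * ln y + 3) * ln y \<le> 40 * y / ln y \<and> 4 \<le> y) at_top"
proof -
  have e1: "eventually (\<lambda>y::real. 0 \<le> ln y - 10) at_top" by (rule ev_lim_ge) real_asymp
  have e2: "eventually (\<lambda>y::real. 0 \<le> (y - 1) / 10 - 1 - y / 20) at_top" by (rule ev_lim_ge) real_asymp
  have e3: "eventually (\<lambda>y::real. 0 \<le> 40 * y / ln y - (20 * sqrt (sqrt y) * sqrt y + 2 * sqrt y * (2 * ln y + 3) * ln y)) at_top"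
    by (rule ev_lim_ge) real_asymp
  have e4: "eventually (\<lambda>y::real. 4 \<le> y) at_top" by (rule eventually_ge_at_top)
  show ?thesis using e1 e2 e3 e4 by eventually_elim auto
qed

theorem lemma3p15:
  shows "\<exists>C>0. \<forall>n::nat. reduced n \<and> n \<ge> 3 \<longrightarrow>
    \<bar>real (bigOmega n) - ln (real n) / ln (ln (real n))\<bar>
      \<le> C * ln (real n) / (ln (ln (real n)))^2"
proof -
  obtain N1 where N1: "\<And>x. x \<ge> N1 \<Longrightarrow> real x / 10 \<le> thetaf x" using theta_lower by blast
  obtain N2 where N2: "\<And>y. y \<ge> N2 \<Longrightarrow> 10 \<le> ln y \<and> y / 20 \<le> (y - 1) / 10 - 1 \<and>
     20 * sqrt (sqrt y) * sqrt y + 2 * sqrt y * (2 * ln y + 3) * ln y \<le> 40 * y / ln y \<and> 4 \<le> y"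
    using final_ev unfolding eventually_at_top_linorder by blast
  define N where "N = max (N1 + 1) (nat \<lceil>N2\<rceil>)"
  define LM where "LM = real N * (2 * ln (real N) + 3)"
  define D where "D = max 1 (ln LM)"
  define C where "C = max 16010 (2 * D^2 + D)"
  have C0: "C > 0" unfolding C_def by simp
  have ln2: "2/3 \<le> ln (2::real)" "ln (2::real) \<le> 1" using ln2_ge_two_thirds ln_le_minus_one[of 2] by auto
  have "reduced n \<and> n \<ge> 3 \<longrightarrow>
    \<bar>real (bigOmega n) - ln (real n) / ln (ln (real n))\<bar> \<le> C * ln (real n) / (ln (ln (real n)))^2" for n
  proof
    assume "reduced n \<and> n \<ge> 3"
    then have red: "reduced n" and n3: "n \<ge> 3" by auto
    obtain q where q: "prime q" "q \<ge> 3"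
      and eL: "ln (real n) = (\<Sum>p\<in>{p. prime p \<and> p < q}. real (multiplicity p n) * ln (real p))"
      and eO: "real (bigOmega n) = (\<Sum>p\<in>{p. prime p \<and> p < q}. real (multiplicity p n))"
      and a1: "\<And>p. prime p \<Longrightarrow> p < q \<Longrightarrow> p \<noteq> 2 \<Longrightarrow> multiplicity p n \<ge> 1"
      and a2: "\<And>p. prime p \<Longrightarrow> p < q \<Longrightarrow> real (multiplicity p n) * ln (real p) \<le> 2 * ln (real q) + 3"
      using reduced_struct[OF red n3] by blast
    define P where "P = {p. prime p \<and> p < q}"
    define a where "a = (\<lambda>p. real (multiplicity p n))"
    define L where "L = ln (real n)"
    define Om where "Om = real (bigOmega n)"
    define l where "l = ln L"
    define Q where "Q = ln (real q)"
    have finP: "finite P" unfolding P_def by (rule finite_subset[of _ "{..q}"]) auto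
    have eL': "L = (\<Sum>p\<in>P. a p * ln (real p))" unfolding L_def a_def P_def by (rule eL)
    have eO': "Om = (\<Sum>p\<in>P. a p)" unfolding Om_def a_def P_def by (rule eO)
    have Pp: "prime p" "p < q" if "p \<in> P" for p using that unfolding P_def by auto
    have a0: "a p \<ge> 0" for p unfolding a_def by simp
    have a2': "a p * ln (real p) \<le> 2 * Q + 3" if "p \<in> P" for p
      unfolding a_def Q_def using a2 Pp[OF that] by blast
    have lp: "ln (real p) \<ge> 2/3" if "p \<in> P" for p
    proof -
      have "real p \<ge> 2" using prime_ge_2_nat[OF Pp(1)[OF that]] by simp
      then have "ln (real p) \<ge> ln 2" by simp
      then show ?thesis using ln2 by linarith
    qed
    have L1: "L > 1"
    proof -
      have "exp 1 < (3::real)" using e_less_272 by simp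
      also have "3 \<le> real n" using n3 by simp
      finally have "ln (exp 1) < ln (real n)" using n3 by (subst ln_less_cancel_iff) auto
      then show ?thesis unfolding L_def by simp
    qed
    have l0: "l > 0" unfolding l_def using L1 by simp
    have Om0: "0 \<le> Om" unfolding Om_def by simp
    have LsumP: "L \<le> real (card P) * (2 * Q + 3)"
    proof -
      have "L \<le> (\<Sum>p\<in>P. 2 * Q + 3)" unfolding eL' by (rule sum_mono) (rule a2')
      then show ?thesis by simp
    qed
    have Q0: "Q > 1"
    proof -
      have "exp 1 < (3::real)" using e_less_272 by simp
      also have "3 \<le> real q" using q by simp
      finally have "ln (exp 1) < ln (real q)" using q by (subst ln_less_cancel_iff) auto
      then show ?thesis unfolding Q_def by simp
    qed
    have goal: "\<bar>Om - L / l\<bar> \<le> C * L / l^2"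
    proof (cases "q < N")
      case True
      have "card P \<le> card {..<q}" unfolding P_def by (intro card_mono) auto
      then have cP: "real (card P) \<le> real q" by simp
      have "L \<le> real q * (2 * Q + 3)" using LsumP cP Q0 by (smt (verit) mult_right_mono)
      also have "\<dots> \<le> real N * (2 * ln (real N) + 3)"
      proof -
        have "Q \<le> ln (real N)" unfolding Q_def using True q by simp
        then show ?thesis using True Q0 by (intro mult_mono) auto
      qed
      finally have "L \<le> LM" unfolding LM_def .
      then have "l \<le> ln LM" unfolding l_def using L1 by (subst ln_le_cancel_iff) auto
      then have lD: "l \<le> D" unfolding D_def by simp
      have "Om \<le> (\<Sum>p\<in>P. 2 * (a p * ln (real p)))" unfolding eO'
      proof (rule sum_mono)
        fix p assume "p \<in> P"
        have "a p * 1 \<le> a p * (2 * ln (real p))" using lp[OF \<open>p \<in> P\<close>] a0[of p] by (intro mult_left_mono) auto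
        then show "a p \<le> 2 * (a p * ln (real p))" by simp
      qed
      also have "\<dots> = 2 * L" unfolding eL' by (simp add: sum_distrib_left)
      finally have "Om \<le> 2 * L" .
      then have "\<bar>Om - L / l\<bar> \<le> (2 * D^2 + D) * L / l^2"
        using Om0 L1 l0 lD by (intro small_arith) auto
      also have "\<dots> \<le> C * L / l^2" unfolding C_def using L1 l0
        by (intro divide_right_mono mult_right_mono) auto
      finally show ?thesis .
    next
      case False
      then have qN1: "q - 1 \<ge> N1" and qN2: "real q \<ge> N2" unfolding N_def by linarith+
      note ev = N2[OF qN2]
      have Q10: "Q \<ge> 10" and q20: "real q / 20 \<le> (real q - 1) / 10 - 1"
        and small: "20 * sqrt (sqrt (real q)) * sqrt (real q) + 2 * sqrt (real q) * (2 * Q + 3) * Q \<le> 40 * real q / Q"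
        and q4: "real q \<ge> 4"
        using ev unfolding Q_def by auto
      have Q0': "Q > 0" using Q10 by simp
      have th: "thetaf (q - 1) = (\<Sum>p\<in>P. ln (real p))"
      proof -
        have "{p. prime p \<and> p \<le> q - 1} = P" unfolding P_def using q by auto
        then show ?thesis unfolding thetaf_def by simp
      qed
      have "(\<Sum>p\<in>P. ln (real p) - (if p = 2 then ln 2 else 0)) \<le> L"
        unfolding eL'
      proof (rule sum_mono)
        fix p assume pP: "p \<in> P"
        show "ln (real p) - (if p = 2 then ln 2 else 0) \<le> a p * ln (real p)"
        proof (cases "p = 2")
          case True
          then show ?thesis using a0[of p] by simp
        next
          case False
          then have "a p \<ge> 1" unfolding a_def using a1 Pp[OF pP] by simp
          then have "1 * ln (real p) \<le> a p * ln (real p)" using lp[OF pP] by (intro mult_right_mono) auto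
          then show ?thesis using False by simp
        qed
      qed
      moreover have "(\<Sum>p\<in>P. ln (real p) - (if p = 2 then ln 2 else 0)) = thetaf (q - 1) - ln 2"
      proof -
        have "2 \<in> P" unfolding P_def using q by simp
        then have "(\<Sum>p\<in>P. (if p = 2 then ln 2 else 0)) = (ln 2 :: real)"
          using finP by (simp add: sum.delta)
        then show ?thesis unfolding th by (simp add: sum_subtractf)
      qed
      moreover have "(real q - 1) / 10 \<le> thetaf (q - 1)"
      proof -
        have "real (q - 1) = real q - 1" using q by simp
        then show ?thesis using N1[OF qN1] by simp
      qed
      ultimately have Llow: "real q / 20 \<le> L" using q20 ln2 by linarith
      have "card P \<le> pif q" unfolding pif_def P_def by (intro card_mono finite_primes_le) auto
      then have "L \<le> real (pif q) * (2 * Q + 3)" using LsumP Q0' by (smt (verit) mult_right_mono of_nat_le_iff)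
      also have "\<dots> \<le> real (pif q) * (3 * Q)" using Q10 by (intro mult_left_mono) auto
      also have "\<dots> = 3 * (real (pif q) * Q)" by simp
      also have "\<dots> \<le> 3 * (8 * real q)" unfolding Q_def using pif_upper[of q] by simp
      finally have Lup: "L \<le> 24 * real q" by simp
      define E where "E = (\<Sum>p\<in>P. a p * (Q - ln (real p)))"
      have OmQ: "Om * Q = L + E"
      proof -
        have "Om * Q = (\<Sum>p\<in>P. a p * Q)" unfolding eO' by (simp add: sum_distrib_right)
        also have "\<dots> = (\<Sum>p\<in>P. a p * ln (real p) + a p * (Q - ln (real p)))"
          by (rule sum.cong) (simp_all add: algebra_simps)
        also have "\<dots> = L + E" unfolding eL' E_def by (rule sum.distrib)
        finally show ?thesis .
      qed
      have lqp: "ln (real p) \<le> Q" if "p \<in> P" for p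
        unfolding Q_def using Pp[OF that] prime_gt_0_nat[OF Pp(1)[OF that]] by simp
      have E0: "E \<ge> 0" unfolding E_def
        by (rule sum_nonneg) (use a0 lqp in simp)
      define K where "K = 2 * (2 * Q + 3) * Q"
      have pt: "a p * (Q - ln (real p)) \<le> 5 * ln (real q / real p) + (if p * p \<le> q then K else 0)"
        if pP: "p \<in> P" for p
      proof -
        have p0: "real p > 0" using prime_gt_0_nat[OF Pp(1)[OF pP]] by simp
        have lnqp: "ln (real q / real p) = Q - ln (real p)" unfolding Q_def using p0 q by (simp add: ln_div)
        have d0: "Q - ln (real p) \<ge> 0" using lqp[OF pP] by simp
        show ?thesis
        proof (cases "p * p \<le> q")
          case True
          have "a p * 1 \<le> a p * (2 * ln (real p))" using lp[OF pP] a0[of p] by (intro mult_left_mono) auto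
          then have "a p \<le> 2 * (a p * ln (real p))" by simp
          also have "\<dots> \<le> 2 * (2 * Q + 3)" using a2'[OF pP] by simp
          finally have ap: "a p \<le> 2 * (2 * Q + 3)" .
          have "a p * (Q - ln (real p)) \<le> a p * Q" using a0[of p] ln_prime_ge0[OF Pp(1)[OF pP]]
            by (intro mult_left_mono) auto
          also have "\<dots> \<le> 2 * (2 * Q + 3) * Q" using ap Q0' by (intro mult_right_mono) auto
          finally show ?thesis using True d0 lnqp unfolding K_def by simp
        next
          case False
          then have "real q < real p ^ 2" by (simp add: power2_eq_square flip: of_nat_mult)
          then have "ln (real q) < ln (real p ^ 2)" using q p0 by (subst ln_less_cancel_iff) auto
          also have "\<dots> = 2 * ln (real p)" using p0 by (simp add: ln_realpow)
          finally have "Q / 2 < ln (real p)" unfolding Q_def by simp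
          then have "a p * (Q / 2) \<le> a p * ln (real p)" using a0[of p] by (intro mult_left_mono) auto
          then have h: "a p * (Q / 2) \<le> 2 * Q + 3" using a2'[OF pP] by (rule order_trans)
          have "a p * Q = 2 * (a p * (Q / 2))" by simp
          also have "\<dots> \<le> 2 * (2 * Q + 3)" using h by simp
          finally have "a p * Q \<le> 4 * Q + 6" by simp
          also have "\<dots> \<le> 5 * Q" using Q10 by linarith
          finally have "a p \<le> 5" using Q0' by simp
          then have "a p * (Q - ln (real p)) \<le> 5 * (Q - ln (real p))" using d0 by (intro mult_right_mono) auto
          then show ?thesis using False lnqp by simp
        qed
      qed
      have "E \<le> (\<Sum>p\<in>P. 5 * ln (real q / real p) + (if p * p \<le> q then K else 0))"
        unfolding E_def by (rule sum_mono) (rule pt)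
      also have "\<dots> = 5 * (\<Sum>p\<in>P. ln (real q / real p)) + (\<Sum>p\<in>P. (if p * p \<le> q then K else 0))"
        by (simp add: sum.distrib sum_distrib_left)
      also have "(\<Sum>p\<in>P. (if p * p \<le> q then K else 0)) = real (card {p\<in>P. p * p \<le> q}) * K"
      proof -
        have "(\<Sum>p\<in>P. (if p * p \<le> q then K else 0)) = (\<Sum>p\<in>{p\<in>P. p * p \<le> q}. K)"
          by (rule sum.inter_filter[OF finP, symmetric])
        then show ?thesis by simp
      qed
      also have "{p\<in>P. p * p \<le> q} = {p. p \<in> P \<and> prime p \<and> p * p \<le> q}" using Pp by blast
      also have "real (card {p. p \<in> P \<and> prime p \<and> p * p \<le> q}) * K \<le> sqrt (real q) * K"
        unfolding K_def using Q0' by (intro mult_right_mono card_primes_sq_le) auto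
      also have "(\<Sum>p\<in>P. ln (real q / real p)) \<le> 32 * real q / Q + 4 * sqrt (sqrt (real q)) * sqrt (real q)"
        unfolding P_def Q_def using q4 by (intro mertens_like) simp
      finally have "E \<le> 5 * (32 * real q / Q + 4 * sqrt (sqrt (real q)) * sqrt (real q)) + sqrt (real q) * K"
        by simp
      also have "\<dots> = 160 * real q / Q + (20 * sqrt (sqrt (real q)) * sqrt (real q) + 2 * sqrt (real q) * (2 * Q + 3) * Q)"
        unfolding K_def by (simp add: algebra_simps)
      also have "\<dots> \<le> 160 * real q / Q + 40 * real q / Q" using small by simp
      finally have Eb: "E \<le> 200 * real q / Q" by simp
      have ln32: "ln (32::real) \<le> 5"
      proof -
        have "ln (32::real) = ln (2 ^ 5)" by simp
        also have "\<dots> = 5 * ln 2" by (simp only: ln_realpow)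
        finally show ?thesis using ln2 by linarith
      qed
      have L0: "L > 0" using L1 by simp
      have q0: "real q > 0" using q by simp
      have "ln (real q / 20) \<le> l" unfolding l_def using Llow q0 by (subst ln_le_cancel_iff) auto
      moreover have "ln (real q / 20) = Q - ln 20" unfolding Q_def using q0 by (simp add: ln_div)
      moreover have "ln (20::real) \<le> ln 32" by simp
      ultimately have l1: "Q - 5 \<le> l" using ln32 by linarith
      have "l \<le> ln (24 * real q)" unfolding l_def using Lup L0 by (subst ln_le_cancel_iff) auto
      moreover have "ln (24 * real q) = ln 24 + Q" unfolding Q_def using q0 by (simp add: ln_mult)
      moreover have "ln (24::real) \<le> ln 32" by simp
      ultimately have l2: "l \<le> Q + 5" using ln32 by linarith
      have "\<bar>Om - L / l\<bar> \<le> 16010 * L / l^2"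
        by (rule large_arith[OF OmQ E0 Eb _ Q10 l0]) (use Llow l1 l2 L0 Q10 in auto)
      also have "\<dots> \<le> C * L / l^2" unfolding C_def using L0 l0
        by (intro divide_right_mono mult_right_mono) auto
      finally show ?thesis .
    qed
    show "\<bar>real (bigOmega n) - ln (real n) / ln (ln (real n))\<bar> \<le> C * ln (real n) / (ln (ln (real n)))^2"
      using goal unfolding Om_def L_def l_def .
  qed
  then show ?thesis using C0 by blast
qed


end
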